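(* For every integer $s\geq 0$, as formal power series in $t$, $$\sum_{n=0}^{\infty} L_{n,s}\,\frac{t^n}{n!} \;=\; \frac{e^{-1+\sqrt{1-2t}}}{\sqrt{1-2t}}\cdot\frac{\bigl(1-\sqrt{1-2t}\bigr)^s}{s!}.$$
   Context: A linear chord diagram with $n$ chords is a partition of $[2n]=\{1,2,\dots,2n\}$ into $n$ blocks of size two, called chords (equivalently, a perfect matching of $[2n]$). For a chord $\{a,b\}$ with $a<b$, its length is $b-a$. A short chord is a chord of length one, i.e. a chord of the form $\{i,i+1\}$. For $n\ge 0$ and $0\le s\le n$, $L_{n,s}$ denotes the number of linear chord diagrams with $n$ chords having exactly $s$ short chords (so $L_{0,0}=1$), and $L_{n,s}=0$ for $s>n$. *)

theory Defs
  imports "HOL-Computational_Algebra.Formal_Power_Series" "HOL-Library.Disjoint_Sets"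
begin

definition chord_diagrams :: "nat \<Rightarrow> nat set set set" where
  "chord_diagrams n = {M. partition_on {1..2*n} M \<and> (\<forall>c\<in>M. card c = 2)}"

definition short_chords :: "nat set set \<Rightarrow> nat set set" where
  "short_chords M = {c \<in> M. \<exists>i. c = {i, Suc i}}"

definition L :: "nat \<Rightarrow> nat \<Rightarrow> nat" where
  "L n s = card {M \<in> chord_diagrams n. card (short_chords M) = s}"

definition sqrt_1m2t :: "real fps" where
  "sqrt_1m2t = fps_binomial (1/2) oo (- 2 * fps_X)"

end

theory Submission
  imports Defs
begin


definition matching :: "nat set \<Rightarrow> nat set set \<Rightarrow> bool" where
  "matching A M \<longleftrightarrow> partition_on A M \<and> (\<forall>c\<in>M. card c = 2)"

lemma CD_eq: "chord_diagrams n = {M. matching {1..2*n} M}"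
  by (simp add: chord_diagrams_def matching_def)

definition sh :: "nat \<Rightarrow> nat \<Rightarrow> nat" where
  "sh a i = (if Suc i < a then Suc i else i + 2)"
definition ush :: "nat \<Rightarrow> nat \<Rightarrow> nat" where
  "ush a j = (if j < a then j - 1 else j - 2)"
definition ins :: "nat set set \<Rightarrow> nat \<Rightarrow> nat set set" where
  "ins M a = insert {1,a} ((`) (sh a) ` M)"

lemma inj_sh: "inj (sh a)"
  by (auto simp: inj_def sh_def split: if_splits)

lemma sh_img: "a \<in> {2..2*n+2} \<Longrightarrow> sh a ` {1..2*n} = {2..2*n+2} - {a}"
proof
  assume a: "a \<in> {2..2*n+2}"
  show "sh a ` {1..2*n} \<subseteq> {2..2*n+2} - {a}" by (auto simp: sh_def)
  show "{2..2*n+2} - {a} \<subseteq> sh a ` {1..2*n}"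
  proof
    fix j assume j: "j \<in> {2..2*n+2} - {a}"
    have "j = sh a (ush a j)" "ush a j \<in> {1..2*n}" using a j by (auto simp: sh_def ush_def)
    then show "j \<in> sh a ` {1..2*n}" by blast
  qed
qed

lemma ush_sh: "a \<ge> 2 \<Longrightarrow> j \<ge> 2 \<Longrightarrow> j \<noteq> a \<Longrightarrow> sh a (ush a j) = j"
  by (auto simp: sh_def ush_def)

lemma matching_inj_image:
  assumes "matching A M" "inj_on f A"
  shows "matching (f ` A) ((`) f ` M)"
proof -
  have P: "partition_on A M" and C: "\<forall>c\<in>M. card c = 2" using assms(1) by (auto simp: matching_def)
  have "partition_on (f ` A) ((`) f ` M - {{}})" by (rule partition_on_inj_image[OF P assms(2)])
  moreover have "{} \<notin> (`) f ` M" using partition_onD3[OF P] by auto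
  ultimately have "partition_on (f ` A) ((`) f ` M)" by simp
  moreover have "\<forall>c\<in>(`) f ` M. card c = 2"
  proof
    fix d assume "d \<in> (`) f ` M"
    then obtain c where c: "c \<in> M" "d = f ` c" by auto
    have "c \<subseteq> A" using P c(1) by (auto simp: partition_on_def)
    then have "inj_on f c" using assms(2) inj_on_subset by blast
    then show "card d = 2" using c C card_image by fastforce
  qed
  ultimately show ?thesis by (simp add: matching_def)
qed

lemma matching_insert:
  assumes "matching A M" "x \<notin> A" "y \<notin> A" "x \<noteq> y"
  shows "matching (insert x (insert y A)) (insert {x,y} M)"
proof -
  have P: "partition_on A M" and C: "\<forall>c\<in>M. card c = 2" using assms(1) by (auto simp: matching_def)
  have U: "\<Union>M = A" using P by (auto simp: partition_on_def)
  have d: "disjnt {x,y} (\<Union>M)" using U assms by (auto simp: disjnt_def)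
  have "insert x (insert y A) - {x,y} = A" using assms by auto
  then have "partition_on (insert x (insert y A)) (insert {x,y} M)"
    using partition_on_insert[OF d] P by auto
  then show ?thesis using C assms(4) by (simp add: matching_def)
qed

lemma matching_remove:
  assumes "matching A M" "c \<in> M"
  shows "matching (A - c) (M - {c})"
proof -
  have P: "partition_on A M" and C: "\<forall>c\<in>M. card c = 2" using assms(1) by (auto simp: matching_def)
  have d: "disjnt c (\<Union>(M - {c}))"
    using P assms(2) by (auto simp: partition_on_def disjnt_def disjoint_def)
  have "insert c (M - {c}) = M" using assms(2) by auto
  then have "partition_on A (insert c (M - {c}))" using P by simp
  then have "partition_on (A - c) (M - {c})" using partition_on_insert[OF d] by blast
  then show ?thesis using C by (simp add: matching_def)
qed

lemma ins_CD:
  assumes M: "M \<in> chord_diagrams n" and a: "a \<in> {2..2*n+2}"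
  shows "ins M a \<in> chord_diagrams (Suc n)"
proof -
  have "matching (sh a ` {1..2*n}) ((`) (sh a) ` M)"
    using matching_inj_image[OF _ inj_on_subset[OF inj_sh subset_UNIV]] M by (simp add: CD_eq)
  then have m: "matching ({2..2*n+2} - {a}) ((`) (sh a) ` M)" using sh_img[OF a] by simp
  have "matching (insert 1 (insert a ({2..2*n+2} - {a}))) (ins M a)"
    unfolding ins_def by (rule matching_insert[OF m]) (use a in simp_all)
  moreover have "insert 1 (insert a ({2..2*n+2} - {a})) = {1..2*Suc n}"
  proof (intro equalityI subsetI)
    fix x assume "x \<in> {1..2*Suc n}" then show "x \<in> insert 1 (insert a ({2..2*n+2} - {a}))" by auto
  next
    fix x assume "x \<in> insert 1 (insert a ({2..2*n+2} - {a}))" then show "x \<in> {1..2*Suc n}" using a by auto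
  qed
  ultimately show ?thesis by (simp add: CD_eq)
qed


lemma sh_ush: "ush a (sh a i) = i"
  by (simp add: sh_def ush_def)

lemma sh_ge2: "i \<ge> 1 \<Longrightarrow> sh a i \<ge> 2"
  by (auto simp: sh_def)

lemma CD_blocks: "M \<in> chord_diagrams n \<Longrightarrow> b \<in> M \<Longrightarrow> b \<subseteq> {1..2*n}"
  by (auto simp: chord_diagrams_def partition_on_def)

lemma one_notin_img: "M \<in> chord_diagrams n \<Longrightarrow> b \<in> M \<Longrightarrow> 1 \<notin> sh a ` b"
proof
  assume M: "M \<in> chord_diagrams n" and b: "b \<in> M" and "1 \<in> sh a ` b"
  then obtain i where i: "i \<in> b" "sh a i = 1" by auto
  have "i \<ge> 1" using CD_blocks[OF M b] i(1) by auto
  then show False using sh_ge2[of i a] i(2) by simp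
qed

lemma inj_img_sh: "inj ((`) (sh a))"
  by (rule injI) (simp add: inj_image_eq_iff[OF inj_sh])

lemma inj_img_img_sh: "inj ((`) ((`) (sh a)))"
  by (rule injI) (simp add: inj_image_eq_iff[OF inj_img_sh])

lemma ins_inj: "inj_on (\<lambda>(M,a). ins M a) (chord_diagrams n \<times> {2..2*n+2})"
proof (rule inj_onI, clarify)
  fix M1 a1 M2 a2
  assume M1: "M1 \<in> chord_diagrams n" and a1: "a1 \<in> {2..2*n+2}"
    and M2: "M2 \<in> chord_diagrams n" and a2: "a2 \<in> {2..2*n+2}"
    and eq: "ins M1 a1 = ins M2 a2"
  have "{1,a1} \<in> ins M1 a1" by (simp add: ins_def)
  then have "{1,a1} \<in> ins M2 a2" using eq by simp
  moreover have "{1,a1} \<notin> (`) (sh a2) ` M2" using one_notin_img[OF M2] by blast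
  ultimately have "{1,a1} = {1,a2}" by (simp add: ins_def)
  then have aa: "a1 = a2" using a1 a2 by (simp add: doubleton_eq_iff)
  have n1: "{1,a1} \<notin> (`) (sh a1) ` M1" using one_notin_img[OF M1] by blast
  have n2: "{1,a1} \<notin> (`) (sh a1) ` M2" using one_notin_img[OF M2] by blast
  have "(`) (sh a1) ` M1 = (`) (sh a1) ` M2"
    using eq aa n1 n2 unfolding ins_def by (simp add: insert_ident)
  then have "M1 = M2" by (simp add: inj_image_eq_iff[OF inj_img_sh])
  then show "M1 = M2 \<and> a1 = a2" using aa by simp
qed

lemma ins_surj:
  assumes M: "M \<in> chord_diagrams (Suc n)"
  shows "M \<in> (\<lambda>(M,a). ins M a) ` (chord_diagrams n \<times> {2..2*n+2})"
proof -
  have mM: "matching {1..2*Suc n} M" using M by (simp add: CD_eq)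
  have P: "partition_on {1..2*Suc n} M" and C: "\<forall>c\<in>M. card c = 2" using mM by (auto simp: matching_def)
  have "1 \<in> \<Union>M" using P by (auto simp: partition_on_def)
  then obtain c where c: "c \<in> M" "1 \<in> c" by auto
  obtain x y where xy: "c = {x,y}" "x \<noteq> y" using C c(1) by (meson card_2_iff)
  obtain a where ca: "c = {1,a}" "a \<noteq> 1" using xy c(2) by auto
  have "c \<subseteq> {1..2*Suc n}" using P c(1) by (auto simp: partition_on_def)
  then have a: "a \<in> {2..2*n+2}" using ca by auto
  define B where "B = {2..2*n+2} - {a}"
  have m0: "matching B (M - {c})"
  proof -
    have "{1..2*Suc n} - c = B" using ca a unfolding B_def by auto
    then show ?thesis using matching_remove[OF mM c(1)] by simp
  qed
  have shB: "sh a ` {1..2*n} = B" using sh_img[OF a] B_def by simp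
  have ushB: "ush a ` B = {1..2*n}"
    unfolding shB[symmetric] image_image sh_ush by simp
  have injB: "inj_on (ush a) B"
    by (rule inj_on_inverseI[where g="sh a"]) (use a in \<open>auto simp: B_def intro: ush_sh\<close>)
  define M' where "M' = (`) (ush a) ` (M - {c})"
  have M': "M' \<in> chord_diagrams n"
    using matching_inj_image[OF m0 injB] ushB unfolding M'_def by (simp add: CD_eq)
  have blocks: "b \<subseteq> B" if "b \<in> M - {c}" for b
    using m0 that by (auto simp: matching_def partition_on_def)
  have "(`) (sh a) ` M' = M - {c}"
  proof -
    have "sh a ` ush a ` b = b" if "b \<in> M - {c}" for b
    proof -
      have "sh a ` ush a ` b = (\<lambda>j. sh a (ush a j)) ` b" by (simp add: image_image)
      also have "\<dots> = (\<lambda>j. j) ` b"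
      proof (rule image_cong[OF refl])
        fix x assume "x \<in> b"
        then have "x \<in> B" using blocks[OF that] by blast
        then show "sh a (ush a x) = x" using a by (intro ush_sh) (auto simp: B_def)
      qed
      finally show ?thesis by simp
    qed
    then show ?thesis unfolding M'_def image_image by simp
  qed
  then have "ins M' a = M" unfolding ins_def using ca c(1) by auto
  then show ?thesis using M' a by force
qed

lemma ins_bij: "bij_betw (\<lambda>(M,a). ins M a) (chord_diagrams n \<times> {2..2*n+2}) (chord_diagrams (Suc n))"
proof -
  have "(\<lambda>(M,a). ins M a) ` (chord_diagrams n \<times> {2..2*n+2}) \<subseteq> chord_diagrams (Suc n)"
    using ins_CD by auto
  moreover have "chord_diagrams (Suc n) \<subseteq> (\<lambda>(M,a). ins M a) ` (chord_diagrams n \<times> {2..2*n+2})"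
    using ins_surj by blast
  ultimately show ?thesis unfolding bij_betw_def using ins_inj by blast
qed


lemma dbl_short: "(\<exists>i. {p,q} = {i, Suc i}) \<longleftrightarrow> (q = Suc p \<or> p = Suc q)" for p q :: nat
  by (auto simp: doubleton_eq_iff)

lemma one_pair_short: "(a::nat) \<ge> 2 \<Longrightarrow> (\<exists>i. {1,a} = {i,Suc i}) \<longleftrightarrow> a = 2"
  using dbl_short[of 1 a] by (simp add: eval_nat_numeral)

lemma sing_filter: "{c \<in> {x}. P c} = (if P x then {x} else {})" by auto

lemma img_short:
  assumes a: "a \<ge> 2" and b: "card b = 2"
  shows "(\<exists>i. sh a ` b = {i, Suc i}) \<longleftrightarrow> (\<exists>i. b = {i, Suc i}) \<and> b \<noteq> {a-2, a-1}"
proof -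
  obtain x y where xy: "b = {x,y}" "x \<noteq> y" using b by (meson card_2_iff)
  have "sh a ` b = {sh a x, sh a y}" using xy by simp
  then show ?thesis using xy a
    unfolding dbl_short by (auto simp: sh_def doubleton_eq_iff split: if_splits)
qed

lemma CD_card2: "M \<in> chord_diagrams n \<Longrightarrow> b \<in> M \<Longrightarrow> card b = 2"
  by (auto simp: chord_diagrams_def)

lemma CD_finite: "M \<in> chord_diagrams n \<Longrightarrow> finite M"
  by (auto simp: chord_diagrams_def intro: finite_elements)

lemma short_ins:
  assumes M: "M \<in> chord_diagrams n" and a: "a \<in> {2..2*n+2}"
  shows "short_chords (ins M a) = (if a = 2 then {{1,2}} else {}) \<union> (`) (sh a) ` (short_chords M - {{a-2,a-1}})"
proof -
  have "short_chords (ins M a) = {c \<in> {{1,a}}. \<exists>i. c = {i,Suc i}} \<union> {c \<in> (`) (sh a) ` M. \<exists>i. c = {i,Suc i}}"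
    by (auto simp: short_chords_def ins_def)
  also have "{c \<in> {{1,a}}. \<exists>i. c = {i,Suc i}} = (if a = 2 then {{1,2}} else {})"
  proof -
    have "a \<ge> 2" using a by simp
    then show ?thesis unfolding sing_filter by (simp only: one_pair_short) simp
  qed
  also have "{c \<in> (`) (sh a) ` M. \<exists>i. c = {i,Suc i}} = (`) (sh a) ` {b \<in> M. \<exists>i. sh a ` b = {i,Suc i}}"
    by auto
  also have "{b \<in> M. \<exists>i. sh a ` b = {i,Suc i}} = short_chords M - {{a-2,a-1}}"
  proof (intro equalityI subsetI)
    fix b assume b: "b \<in> {b \<in> M. \<exists>i. sh a ` b = {i,Suc i}}"
    then have bM: "b \<in> M" by blast
    have "(\<exists>i. b = {i, Suc i}) \<and> b \<noteq> {a-2, a-1}"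
      using img_short[of a b] CD_card2[OF M bM] a b by simp
    then show "b \<in> short_chords M - {{a-2,a-1}}" using bM by (simp add: short_chords_def)
  next
    fix b assume b: "b \<in> short_chords M - {{a-2,a-1}}"
    then have bM: "b \<in> M" by (simp add: short_chords_def)
    have "(\<exists>i. b = {i, Suc i}) \<and> b \<noteq> {a-2, a-1}" using b by (simp add: short_chords_def)
    then have "\<exists>i. sh a ` b = {i,Suc i}"
      using img_short[of a b] CD_card2[OF M bM] a by simp
    then show "b \<in> {b \<in> M. \<exists>i. sh a ` b = {i,Suc i}}" using bM by simp
  qed
  finally show ?thesis .
qed

definition sc :: "nat set set \<Rightarrow> nat" where "sc M = card (short_chords M)"

lemma sc_ins:
  assumes M: "M \<in> chord_diagrams n" and a: "a \<in> {2..2*n+2}"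
  shows "sc (ins M a) = (if a = 2 then 1 else 0) + (sc M - (if {a-2,a-1} \<in> M then 1 else 0))"
proof -
  have fin: "finite (short_chords M)" using CD_finite[OF M] by (auto simp: short_chords_def)
  have disj: "(if a = 2 then {{1,2}} else {}) \<inter> (`) (sh a) ` (short_chords M - {{a-2,a-1}}) = {}"
  proof -
    have "{1,2} \<notin> (`) (sh a) ` M" using one_notin_img[OF M] by blast
    then show ?thesis by (auto simp: short_chords_def)
  qed
  have "card ((`) (sh a) ` (short_chords M - {{a-2,a-1}})) = card (short_chords M - {{a-2,a-1}})"
    by (rule card_image) (rule inj_on_subset[OF inj_img_sh subset_UNIV])
  also have "\<dots> = sc M - (if {a-2,a-1} \<in> M then 1 else 0)"
  proof -
    have "{a-2,a-1} \<in> M \<longleftrightarrow> {a-2,a-1} \<in> short_chords M"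
      using a by (auto simp: short_chords_def intro!: exI[of _ "a-2"])
    then show ?thesis using fin by (simp add: sc_def card_Diff_singleton_if)
  qed
  finally have c2: "card ((`) (sh a) ` (short_chords M - {{a-2,a-1}})) = sc M - (if {a-2,a-1} \<in> M then 1 else 0)" .
  show ?thesis
    unfolding sc_def short_ins[OF M a]
    using card_Un_disjoint[OF _ _ disj] fin c2 by (simp add: sc_def)
qed


definition AM :: "nat \<Rightarrow> nat set set \<Rightarrow> nat set" where
  "AM n M = {a \<in> {3..2*n+2}. {a-2,a-1} \<in> M}"

lemma card_AM:
  assumes M: "M \<in> chord_diagrams n"
  shows "card (AM n M) = sc M"
proof -
  have inj: "inj_on (\<lambda>a. {a-2,a-1}) (AM n M)"
  proof (rule inj_onI)
    fix x y assume "x \<in> AM n M" "y \<in> AM n M" "{x-2,x-1} = {y-2,y-1}"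
    then show "x = y" by (auto simp: AM_def doubleton_eq_iff)
  qed
  have "(\<lambda>a. {a-2,a-1}) ` (AM n M) = short_chords M"
  proof (intro equalityI subsetI)
    fix c assume "c \<in> (\<lambda>a. {a-2,a-1}) ` (AM n M)"
    then obtain a where a: "a \<in> AM n M" "c = {a-2,a-1}" by auto
    then have "c = {a-2, Suc (a-2)}" by (auto simp: AM_def)
    then show "c \<in> short_chords M" using a by (auto simp: AM_def short_chords_def)
  next
    fix c assume c: "c \<in> short_chords M"
    then obtain i where i: "c = {i, Suc i}" "c \<in> M" by (auto simp: short_chords_def)
    have "c \<subseteq> {1..2*n}" using CD_blocks[OF M i(2)] .
    then have r: "i \<ge> 1" "Suc i \<le> 2*n" using i(1) by auto
    have "c = {(i+2)-2, (i+2)-1}" using i(1) by simp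
    moreover have "i + 2 \<in> AM n M" using r i by (auto simp: AM_def)
    ultimately show "c \<in> (\<lambda>a. {a-2,a-1}) ` (AM n M)" by blast
  qed
  then show ?thesis using card_image[OF inj] by (simp add: sc_def)
qed

lemma AM_sub: "AM n M \<subseteq> {3..2*n+2}"
  by (auto simp: AM_def)

lemma count_a:
  assumes M: "M \<in> chord_diagrams n"
  shows "(\<Sum>a\<in>{2..2*n+2}. if sc (ins M a) = s then 1 else 0 :: real)
    = (if Suc (sc M) = s then 1 else 0) + (if sc M = Suc s then real (sc M) else 0)
      + (if sc M = s then 2 * real n - real (sc M) else 0)"
proof -
  define A where "A = AM n M"
  have cA: "card A = sc M" using card_AM[OF M] A_def by simp
  have sub: "A \<subseteq> {3..2*n+2}" using AM_sub A_def by simp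
  have cR: "card ({3..2*n+2} - A) = 2*n - sc M"
    using card_Diff_subset[OF finite_subset[OF sub] sub] cA by simp
  have le: "sc M \<le> 2*n" using card_mono[OF _ sub] cA by simp
  have iv: "{2..2*n+2} = insert 2 {3..2*n+2}" by auto
  have z: "{0,1} \<notin> M" using CD_blocks[OF M, of "{0,1}"] by auto
  have t2: "sc (ins M 2) = Suc (sc M)" using sc_ins[OF M, of 2] z by simp
  have tA: "sc (ins M a) = sc M - 1" if "a \<in> A" for a
    using sc_ins[OF M, of a] that sub by (auto simp: A_def AM_def)
  have tR: "sc (ins M a) = sc M" if "a \<in> {3..2*n+2} - A" for a
    using sc_ins[OF M, of a] that by (auto simp: A_def AM_def)
  have "(\<Sum>a\<in>{2..2*n+2}. if sc (ins M a) = s then 1 else 0 :: real)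
     = (if Suc (sc M) = s then 1 else 0) + (\<Sum>a\<in>{3..2*n+2}. if sc (ins M a) = s then 1 else 0)"
    unfolding iv by (subst sum.insert) (auto simp: t2)
  also have "(\<Sum>a\<in>{3..2*n+2}. if sc (ins M a) = s then 1 else 0 :: real)
     = (\<Sum>a\<in>{3..2*n+2} - A. if sc (ins M a) = s then 1 else 0) + (\<Sum>a\<in>A. if sc (ins M a) = s then 1 else 0)"
    by (rule sum.subset_diff[OF sub]) simp
  also have "(\<Sum>a\<in>{3..2*n+2} - A. if sc (ins M a) = s then 1 else 0 :: real)
      = (\<Sum>a\<in>{3..2*n+2} - A. if sc M = s then 1 else 0)"
    by (rule sum.cong) (auto simp: tR)
  also have "\<dots> = (if sc M = s then 2 * real n - real (sc M) else 0)"
    using cR le by (simp add: of_nat_diff)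
  also have "(\<Sum>a\<in>A. if sc (ins M a) = s then 1 else 0 :: real)
      = (\<Sum>a\<in>A. if sc M - 1 = s then 1 else 0)"
    by (rule sum.cong) (auto simp: tA)
  also have "\<dots> = (if sc M = Suc s then real (sc M) else 0)"
    using cA by (cases "sc M") auto
  finally show ?thesis by simp
qed


lemma finite_CD: "finite (chord_diagrams n)"
  by (rule finite_subset[OF _ finitely_many_partition_on[of "{1..2*n}"]]) (auto simp: chord_diagrams_def)

lemma L_real: "real (L n s) = (\<Sum>M\<in>chord_diagrams n. if sc M = s then 1 else 0)"
proof -
  have "real (L n s) = (\<Sum>M\<in>{M \<in> chord_diagrams n. sc M = s}. 1)"
    by (simp add: L_def sc_def)
  also have "\<dots> = (\<Sum>M\<in>chord_diagrams n. if sc M = s then 1 else 0)"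
    by (rule sum.inter_filter[OF finite_CD])
  finally show ?thesis .
qed

lemma L_0: "L 0 s = (if s = 0 then 1 else 0)"
proof -
  have "chord_diagrams 0 = {{}}" by (auto simp: chord_diagrams_def partition_on_empty)
  moreover have "short_chords {} = {}" by (simp add: short_chords_def)
  moreover have "{M \<in> chord_diagrams 0. card (short_chords M) = s} = (if s = 0 then {{}} else {})"
    using calculation by auto
  ultimately show ?thesis by (simp add: L_def)
qed

lemma L_rec:
  "real (L (Suc n) s) = (if s \<ge> 1 then real (L n (s-1)) else 0) + real (Suc s) * real (L n (Suc s))
     + (2 * real n - real s) * real (L n s)"
proof -
  let ?C = "chord_diagrams n"
  have "real (L (Suc n) s) = (\<Sum>M\<in>chord_diagrams (Suc n). if sc M = s then 1 else 0)"
    by (rule L_real)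
  also have "\<dots> = (\<Sum>p\<in>?C \<times> {2..2*n+2}. if sc ((\<lambda>(M,a). ins M a) p) = s then 1 else 0)"
    by (rule sum.reindex_bij_betw[OF ins_bij, symmetric])
  also have "\<dots> = (\<Sum>M\<in>?C. \<Sum>a\<in>{2..2*n+2}. if sc (ins M a) = s then 1 else 0)"
    by (subst sum.cartesian_product) (simp add: case_prod_beta')
  also have "\<dots> = (\<Sum>M\<in>?C. (if Suc (sc M) = s then 1 else 0) + (if sc M = Suc s then real (sc M) else 0)
      + (if sc M = s then 2 * real n - real (sc M) else 0))"
    by (rule sum.cong[OF refl]) (rule count_a)
  also have "\<dots> = (\<Sum>M\<in>?C. if Suc (sc M) = s then 1 else 0) + (\<Sum>M\<in>?C. if sc M = Suc s then real (sc M) else 0)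
      + (\<Sum>M\<in>?C. if sc M = s then 2 * real n - real (sc M) else 0)"
    by (simp add: sum.distrib)
  also have "(\<Sum>M\<in>?C. if Suc (sc M) = s then 1 else 0) = (if s \<ge> 1 then real (L n (s-1)) else 0)"
  proof (cases s)
    case 0 then show ?thesis by simp
  next
    case (Suc k)
    then show ?thesis by (simp add: L_real)
  qed
  also have "(\<Sum>M\<in>?C. if sc M = Suc s then real (sc M) else 0) = (\<Sum>M\<in>?C. real (Suc s) * (if sc M = Suc s then 1 else 0))"
    by (rule sum.cong) auto
  also have "\<dots> = real (Suc s) * real (L n (Suc s))"
    by (simp add: L_real sum_distrib_left del: of_nat_Suc)
  also have "(\<Sum>M\<in>?C. if sc M = s then 2 * real n - real (sc M) else 0) = (\<Sum>M\<in>?C. (2 * real n - real s) * (if sc M = s then 1 else 0))"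
    by (rule sum.cong) auto
  also have "\<dots> = (2 * real n - real s) * real (L n s)"
    by (simp add: L_real sum_distrib_left)
  finally show ?thesis .
qed



abbreviation "S \<equiv> sqrt_1m2t"

lemma S0: "fps_nth S 0 = 1"
  by (simp add: sqrt_1m2t_def)

lemma SS: "S * S = 1 - 2 * fps_X"
proof -
  have c0: "fps_nth (- 2 * fps_X :: real fps) 0 = 0" by simp
  have "S * S = (fps_binomial (1/2) * fps_binomial (1/2)) oo (- 2 * fps_X)"
    unfolding sqrt_1m2t_def by (rule fps_compose_mult_distrib[OF c0, symmetric])
  also have "fps_binomial (1/2) * fps_binomial (1/2) = (fps_binomial 1 :: real fps)"
    by (simp add: fps_binomial_add_mult[symmetric])
  also have "fps_binomial 1 oo (- 2 * fps_X) = (1 :: real fps) + (- 2 * fps_X)"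
    by (simp add: fps_binomial_1 fps_compose_add_distrib c0)
  finally show ?thesis by simp
qed

lemma SDS: "S * fps_deriv S = -1"
proof -
  have "fps_deriv (S * S) = fps_deriv (1 - 2 * fps_X :: real fps)" by (simp only: SS)
  then have "2 * (S * fps_deriv S) = 2 * (-1 :: real fps)" by (simp add: algebra_simps)
  then show ?thesis by (metis mult_minus_right mult_cancel_left zero_neq_numeral)
qed

definition V :: "real fps" where "V = inverse S"

lemma SV: "S * V = 1" unfolding V_def by (rule inverse_mult_eq_1') (simp add: S0)

lemma DS: "fps_deriv S = - V"
proof -
  have "fps_deriv S = fps_deriv S * (S * V)" by (simp add: SV)
  also have "\<dots> = (S * fps_deriv S) * V" by (simp add: algebra_simps)
  finally show ?thesis by (simp add: SDS)
qed

lemma DV: "fps_deriv V = V * V * V"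
  unfolding V_def using fps_inverse_deriv[of S] S0 by (simp add: DS V_def power2_eq_square)

definition E :: "real fps" where "E = fps_exp 1 oo (S - 1)"

lemma DE: "fps_deriv E = - E * V"
proof -
  have c0: "fps_nth (S - 1) 0 = 0" by (simp add: S0)
  show ?thesis unfolding E_def fps_compose_deriv[OF c0] by (simp add: DS E_def)
qed

definition H :: "nat \<Rightarrow> real fps" where "H s = E * V * (1 - S) ^ s"

lemma K: "(1 - 2 * fps_X) * fps_deriv (H s) = fps_const (real s) * H (s - 1) + H (Suc s) - fps_const (real s) * H s"
proof (cases s)
  case 0
  have D0: "fps_deriv (H 0) = - E*V*V + E*(V*V*V)" by (simp add: H_def DE DV algebra_simps)
  have "(1 - 2 * fps_X) * fps_deriv (H s) = (S * S) * (- E*V*V + E*(V*V*V))"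
    unfolding 0 D0 SS ..
  also have "\<dots> = E * (- ((S*V)*(S*V)) + (S*V)*(S*V)*V)"
    by (simp add: algebra_simps)
  also have "\<dots> = E * V * (1 - S)"
  proof -
    have "E * V * (1 - S) = E * V - E * (S * V)" by (simp add: algebra_simps)
    then show ?thesis by (simp add: SV algebra_simps)
  qed
  finally show ?thesis by (simp add: 0 H_def)
next
  case (Suc k)
  define P where "P = (1 - S) ^ k"
  define c where "c = fps_const (real (Suc k))"
  have DP1: "fps_deriv ((1 - S) ^ Suc k) = c * V * P"
    by (simp only: fps_deriv_power) (simp add: c_def P_def DS)
  have "(1 - 2 * fps_X) * fps_deriv (H s) = (S * S) * (- E * V * V * ((1-S)*P) + E * (V*V*V) * ((1-S)*P) + E * V * (c * V * P))"
  proof -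
    have "fps_deriv (H (Suc k)) = E * V * fps_deriv ((1 - S) ^ Suc k) + (E * fps_deriv V + fps_deriv E * V) * (1 - S) ^ Suc k"
      unfolding H_def fps_deriv_mult by (simp add: algebra_simps)
    also have "\<dots> = - E * V * V * ((1-S)*P) + E * (V*V*V) * ((1-S)*P) + E * V * (c * V * P)"
      unfolding DP1 DE DV by (simp add: P_def algebra_simps)
    finally show ?thesis unfolding Suc SS[symmetric] by simp
  qed
  also have "\<dots> = c * E * V * P + E * V * ((1-S)*((1-S)*P)) - c * (E * V * ((1-S)*P))"
  proof -
    have "(S * S) * (- E * V * V * ((1-S)*P) + E * (V*V*V) * ((1-S)*P) + E * V * (c * V * P))
      = E * P * (- ((S*V)*(S*V)) * (1-S) + (S*V)*(S*V)*V*(1-S) + c * (S*V)*(S*V))"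
      by (simp add: algebra_simps)
    also have "\<dots> = E * P * (- (1-S) + V*(1-S) + c)" by (simp add: SV)
    also have "\<dots> = c * E * V * P + E * V * ((1-S)*((1-S)*P)) - c * (E * V * ((1-S)*P))"
    proof -
      have "E * P * (- (1-S) + V*(1-S) + c) - (c * E * V * P + E * V * ((1-S)*((1-S)*P)) - c * (E * V * ((1-S)*P)))
          = E * P * ((- (1-S) + V*(1-S) + c) - (c * V + V * (1-S)*(1-S) - c * V * (1-S)))"
        by (simp add: algebra_simps)
      also have "(- (1-S) + V*(1-S) + c) - (c * V + V * (1-S)*(1-S) - c * V * (1-S)) = (1 - S*V) * (S + c - 1)"
        by (simp add: algebra_simps)
      also have "\<dots> = 0" by (simp add: SV)
      finally show ?thesis by simp
    qed
    finally show ?thesis .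
  qed
  finally show ?thesis by (simp add: H_def Suc c_def P_def algebra_simps)
qed


lemma nth2: "fps_nth (2 * g) m = 2 * fps_nth (g :: real fps) m"
  by (simp only: mult_2 fps_add_nth)

lemma coef: "fps_nth ((1 - 2 * fps_X) * fps_deriv F) n = real (Suc n) * fps_nth F (Suc n) - 2 * real n * fps_nth F n"
proof -
  have eq: "(1 - 2 * fps_X) * fps_deriv F = fps_deriv F - (fps_X * fps_deriv F + fps_X * fps_deriv F)"
    by (simp add: algebra_simps mult_2)
  show ?thesis unfolding eq by (cases n) (simp_all add: ring_distribs nth2)
qed

lemma HR: "real (Suc n) * fps_nth (H s) (Suc n) - 2 * real n * fps_nth (H s) n
  = real s * fps_nth (H (s - 1)) n + fps_nth (H (Suc s)) n - real s * fps_nth (H s) n"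
  using arg_cong[OF K[of s], of "\<lambda>f. fps_nth f n"] unfolding coef by simp

lemma H0: "fps_nth (H s) 0 = (if s = 0 then 1 else 0)"
  by (simp add: H_def E_def V_def S0)


lemma main: "real (L n s) = fact n * fps_nth (H s) n / fact s"
proof (induction n arbitrary: s)
  case 0
  then show ?case by (simp add: L_0 H0)
next
  case (Suc n)
  have rec: "real (L (Suc n) s) = (if s \<ge> 1 then real (L n (s-1)) else 0) + real (Suc s) * real (L n (Suc s))
     + (2 * real n - real s) * real (L n s)" by (rule L_rec)
  have hr: "real (Suc n) * fps_nth (H s) (Suc n) = 2 * real n * fps_nth (H s) n
    + real s * fps_nth (H (s - 1)) n + fps_nth (H (Suc s)) n - real s * fps_nth (H s) n"
    using HR[of n s] by simp
  have f1: "fact (Suc n) * fps_nth (H s) (Suc n) / fact s = fact n * (real (Suc n) * fps_nth (H s) (Suc n)) / fact s"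
    by (simp add: fact_Suc algebra_simps)
  have i2: "real (L n (Suc s)) = fact n * fps_nth (H (Suc s)) n / fact (Suc s)" by (rule Suc.IH)
  have i3: "real (L n s) = fact n * fps_nth (H s) n / fact s" by (rule Suc.IH)
  show ?case
  proof (cases s)
    case 0
    show ?thesis unfolding f1 hr rec i2 i3 using 0 by (simp add: field_simps)
  next
    case (Suc k)
    have i1: "real (L n k) = fact n * fps_nth (H k) n / fact k" by (rule Suc.IH)
    define f where "f = (fact n :: real)"
    define g where "g = (fact k :: real)"
    define A where "A = fps_nth (H k) n"
    define B where "B = fps_nth (H (Suc s)) n"
    define D where "D = fps_nth (H s) n"
    have g0: "g > 0" by (simp add: g_def)
    have fs: "(fact s :: real) = (real k + 1) * g" using Suc by (simp add: fact_Suc g_def)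
    have fs2: "(fact (Suc s) :: real) = (real k + 2) * ((real k + 1) * g)" using Suc by (simp add: fact_Suc g_def algebra_simps)
    have "real (L (Suc n) s) = real (L n k) + real (Suc s) * real (L n (Suc s)) + (2 * real n - real s) * real (L n s)"
      using rec Suc by simp
    also have "\<dots> = f*A/g + (real k + 2) * (f*B/((real k + 2)*((real k + 1)*g))) + (2 * real n - (real k + 1)) * (f*D/((real k + 1)*g))"
      unfolding i1 i2 i3 fs fs2 using Suc g0 by (simp add: f_def g_def A_def B_def D_def field_simps)
    also have "(real k + 2) * (f*B/((real k + 2)*((real k + 1)*g))) = f*B/((real k + 1)*g)"
    proof -
      have "real k + 2 \<noteq> 0" by simp
      then show ?thesis by simp
    qed
    also have "f*A/g + f*B/((real k + 1)*g) + (2 * real n - (real k + 1)) * (f*D/((real k + 1)*g))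
       = f * (2 * real n * D + (real k + 1) * A + B - (real k + 1) * D) / ((real k + 1) * g)"
    proof -
      have "g \<noteq> 0" "real k + 1 \<noteq> 0" "g + g * real k \<noteq> 0" "(real k + 1) * g \<noteq> 0"
      proof -
        have gk: "g * real k \<ge> 0" using g0 by simp
        show "g \<noteq> 0" "real k + 1 \<noteq> 0" "(real k + 1) * g \<noteq> 0" using g0 by simp_all
        show "g + g * real k \<noteq> 0" using g0 gk by linarith
      qed
      have e1: "f*A/g = ((real k + 1) * (f*A)) / ((real k + 1)*g)"
        using \<open>real k + 1 \<noteq> 0\<close> by simp
      have e2: "(2 * real n - (real k + 1)) * (f*D/((real k + 1)*g)) = ((2 * real n - (real k + 1)) * (f*D)) / ((real k + 1)*g)"
        by simp
      have "f*A/g + f*B/((real k + 1)*g) + (2 * real n - (real k + 1)) * (f*D/((real k + 1)*g))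
         = ((real k + 1) * (f*A) + f*B + (2 * real n - (real k + 1)) * (f*D)) / ((real k + 1)*g)"
        unfolding e1 e2 by (simp only: add_divide_distrib)
      also have "(real k + 1) * (f*A) + f*B + (2 * real n - (real k + 1)) * (f*D)
          = f * (2 * real n * D + (real k + 1) * A + B - (real k + 1) * D)"
        by (simp add: algebra_simps)
      finally show ?thesis .
    qed
    also have "\<dots> = fact (Suc n) * fps_nth (H s) (Suc n) / fact s"
    proof -
      have hr': "real (Suc n) * fps_nth (H s) (Suc n) = 2 * real n * D + (real k + 1) * A + B - (real k + 1) * D"
        using hr Suc by (simp add: A_def B_def D_def add.commute)
      show ?thesis unfolding f1 unfolding hr' fs f_def by (rule refl)
    qed
    finally show ?thesis .
  qed
qed

theorem theorem2:
  fixes s :: nat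
  shows "Abs_fps (\<lambda>n. real (L n s) / fact n)
    = (fps_exp 1 oo (sqrt_1m2t - 1)) / sqrt_1m2t
      * ((1 - sqrt_1m2t) ^ s / fps_const (fact s))"
proof -
  have "(fps_exp 1 oo (sqrt_1m2t - 1)) / sqrt_1m2t = E * V"
    unfolding E_def[symmetric] V_def by (rule fps_divide_unit) (simp add: S0)
  then have r: "(fps_exp 1 oo (sqrt_1m2t - 1)) / sqrt_1m2t * ((1 - sqrt_1m2t) ^ s / fps_const (fact s))
     = fps_const (inverse (fact s)) * H s"
    by (simp add: H_def algebra_simps)
  show ?thesis unfolding r
  proof (rule fps_ext)
    fix n
    show "fps_nth (Abs_fps (\<lambda>n. real (L n s) / fact n)) n = fps_nth (fps_const (inverse (fact s)) * H s) n"
      using main[of n s] by (simp add: field_simps)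
  qed
qed

end
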